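(* Let $\Lambda$ be an antichain lattice in $\mathbb{Z}^n$ and let $A\subseteq\mathbb{Z}^n$ be a generic $\Lambda$-finite set. Then for each $\alpha\in A$, the set of neighbors of $\alpha$ in $A$ is finite.
   Context: Notation: $\ll$ strict componentwise inequality, $\vee$ componentwise maximum; antichain lattice = subgroup of $\mathbb{Z}^n$ whose distinct elements are pairwise incomparable. $T_\eta=\eta-\mathbb{N}^n$, $T^o_\eta=\{\beta:\beta\ll\eta\}$; the $X$-face ($\emptyset\ne X\subseteq[n]$) of $T_\eta$ is $\{\alpha\in T_\eta:\alpha_i=\eta_i\ \forall i\in X\}$. $A$ is generic if whenever $T^o_\eta\cap A=\emptyset$, each face of $T_\eta$ contains at most one point of $A$. $A$ is $\Lambda$-finite if $A=A+\Lambda$ and $A=A_0+\Lambda$ for some finite $A_0$. A neighbor of $\alpha$ in $A$ is an element $\beta\in A$, $\beta\ne\alpha$, such that $\{\alpha,\beta\}$ is neighborly, i.e. $T^o_{\alpha\vee\beta}\cap A=\emptyset$. *)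

theory Defs
  imports "HOL-Analysis.Finite_Cartesian_Product"
begin

definition cle :: "int ^ 'n \<Rightarrow> int ^ 'n \<Rightarrow> bool" where
  "cle x y \<longleftrightarrow> (\<forall>i. x $ i \<le> y $ i)"

definition cless :: "int ^ 'n \<Rightarrow> int ^ 'n \<Rightarrow> bool" where
  "cless x y \<longleftrightarrow> (\<forall>i. x $ i < y $ i)"

definition cmax :: "int ^ 'n \<Rightarrow> int ^ 'n \<Rightarrow> int ^ 'n" where
  "cmax x y = (\<chi> i. max (x $ i) (y $ i))"

definition antichain_lattice :: "(int ^ 'n) set \<Rightarrow> bool" where
  "antichain_lattice L \<longleftrightarrow>
     0 \<in> L \<and> (\<forall>a\<in>L. \<forall>b\<in>L. a + b \<in> L) \<and> (\<forall>a\<in>L. - a \<in> L) \<and>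
     (\<forall>a\<in>L. \<forall>b\<in>L. a \<noteq> b \<longrightarrow> \<not> cle a b)"

definition Tcone :: "int ^ 'n \<Rightarrow> (int ^ 'n) set" where
  "Tcone \<eta> = {\<beta>. cle \<beta> \<eta>}"

definition Tint :: "int ^ 'n \<Rightarrow> (int ^ 'n) set" where
  "Tint \<eta> = {\<beta>. cless \<beta> \<eta>}"

definition face :: "int ^ 'n \<Rightarrow> 'n set \<Rightarrow> (int ^ 'n) set" where
  "face \<eta> X = {\<alpha> \<in> Tcone \<eta>. \<forall>i\<in>X. \<alpha> $ i = \<eta> $ i}"

definition generic :: "(int ^ 'n) set \<Rightarrow> bool" where
  "generic A \<longleftrightarrow> (\<forall>\<eta>. Tint \<eta> \<inter> A = {} \<longrightarrow>
      (\<forall>X. X \<noteq> {} \<longrightarrow> (\<forall>a\<in>face \<eta> X \<inter> A. \<forall>b\<in>face \<eta> X \<inter> A. a = b)))"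

definition setplus :: "(int ^ 'n) set \<Rightarrow> (int ^ 'n) set \<Rightarrow> (int ^ 'n) set" where
  "setplus A B = {a + b | a b. a \<in> A \<and> b \<in> B}"

definition lattice_finite :: "(int ^ 'n) set \<Rightarrow> (int ^ 'n) set \<Rightarrow> bool" where
  "lattice_finite L A \<longleftrightarrow> A = setplus A L \<and> (\<exists>A0. finite A0 \<and> A = setplus A0 L)"

definition neighborly :: "(int ^ 'n) set \<Rightarrow> int ^ 'n \<Rightarrow> int ^ 'n \<Rightarrow> bool" where
  "neighborly A a b \<longleftrightarrow> Tint (cmax a b) \<inter> A = {}"

definition neighbors :: "(int ^ 'n) set \<Rightarrow> int ^ 'n \<Rightarrow> (int ^ 'n) set" where
  "neighbors A a = {b \<in> A. b \<noteq> a \<and> neighborly A a b}"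

end

theory Submission
  imports Defs
begin

lemma mono_subseq_nat:
  fixes s :: "nat \<Rightarrow> nat"
  shows "\<exists>g::nat\<Rightarrow>nat. strict_mono g \<and> mono (s \<circ> g)"
proof -
  obtain f where f: "strict_mono f" "monoseq (\<lambda>n. s (f n))"
    using seq_monosub by blast
  show ?thesis
  proof (cases "\<forall>m. \<forall>n\<ge>m. s (f m) \<le> s (f n)")
    case True
    then show ?thesis using f(1) by (intro exI[of _ f]) (auto simp: mono_def o_def)
  next
    case False
    then have dec: "\<forall>m. \<forall>n\<ge>m. s (f n) \<le> s (f m)" using f(2) unfolding monoseq_def by blast
    obtain N where N: "\<forall>a. s (f N) \<le> s (f a)"
      using ex_has_least_nat[where P="\<lambda>_. True" and m="\<lambda>n. s (f n)"] by blast
    have c: "s (f (n + N)) = s (f N)" for n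
      using dec N by (meson antisym le_add2)
    show ?thesis
      apply (rule exI[of _ "\<lambda>n. f (n + N)"])
      using f(1) c by (auto simp: strict_mono_def mono_def)
  qed
qed

lemma mono_subseq_multi:
  fixes v :: "nat \<Rightarrow> 'i \<Rightarrow> nat"
  assumes "finite I"
  shows "\<exists>g::nat\<Rightarrow>nat. strict_mono g \<and> (\<forall>i\<in>I. mono (\<lambda>n. v (g n) i))"
  using assms
proof (induction I rule: finite_induct)
  case empty
  have "strict_mono (id::nat\<Rightarrow>nat)" by (simp add: strict_mono_def)
  then show ?case by blast
next
  case (insert j I)
  then obtain g :: "nat \<Rightarrow> nat" where g: "strict_mono g" "\<forall>i\<in>I. mono (\<lambda>n. v (g n) i)" by blast
  obtain g' :: "nat \<Rightarrow> nat" where g': "strict_mono g'" "mono ((\<lambda>n. v (g n) j) \<circ> g')"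
    using mono_subseq_nat by blast
  have sm: "strict_mono (g \<circ> g')" using g(1) g'(1) by (simp add: strict_mono_def)
  have "mono (\<lambda>n. v (g (g' n)) i)" if "i \<in> I" for i
  proof -
    have "mono g'" using g'(1) strict_mono_mono by blast
    then show ?thesis using g(2) that by (auto simp: mono_def)
  qed
  moreover have "mono (\<lambda>n. v (g (g' n)) j)" using g'(2) by (simp add: o_def)
  ultimately show ?case using sm unfolding o_def by blast
qed

lemma key:
  assumes gen: "generic A" and al: "\<alpha> \<in> A" and b: "\<beta> \<in> neighbors A \<alpha>"
    and x: "x \<in> A" and le: "cle x (cmax \<alpha> \<beta>)"
  shows "x = \<alpha> \<or> x = \<beta>"
proof -
  let ?e = "cmax \<alpha> \<beta>"
  have bA: "\<beta> \<in> A" and emp: "Tint ?e \<inter> A = {}"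
    using b by (auto simp: neighbors_def neighborly_def)
  have "\<not> cless x ?e" using emp x by (auto simp: Tint_def)
  then obtain i where i: "\<not> x $ i < ?e $ i" by (auto simp: cless_def)
  have ei: "?e $ i = max (\<alpha> $ i) (\<beta> $ i)" by (simp add: cmax_def)
  have xi: "x $ i = ?e $ i" using i le unfolding cle_def by (meson not_less order_antisym)
  have xf: "x \<in> face ?e {i}" using le xi by (simp add: face_def Tcone_def)
  have af: "cle \<alpha> ?e" "cle \<beta> ?e" by (auto simp: cle_def cmax_def)
  have G: "\<And>a b. a \<in> face ?e {i} \<inter> A \<Longrightarrow> b \<in> face ?e {i} \<inter> A \<Longrightarrow> a = b"
    using gen emp unfolding generic_def by blast
  show ?thesis
  proof (cases "\<beta> $ i \<le> \<alpha> $ i")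
    case True
    then have "\<alpha> \<in> face ?e {i}" using af ei by (simp add: face_def Tcone_def)
    then show ?thesis using G xf x al by blast
  next
    case False
    then have "\<beta> \<in> face ?e {i}" using af ei by (simp add: face_def Tcone_def)
    then show ?thesis using G xf x bA by blast
  qed
qed

theorem mainTheorem14:
  fixes L A :: "(int ^ 'n) set" and \<alpha> :: "int ^ 'n"
  assumes "antichain_lattice L"
    and "generic A"
    and "lattice_finite L A"
    and "\<alpha> \<in> A"
  shows "finite (neighbors A \<alpha>)"
proof (rule ccontr)
  assume inf: "infinite (neighbors A \<alpha>)"
  then obtain f :: "nat \<Rightarrow> int ^ 'n" where f: "inj f" "range f \<subseteq> neighbors A \<alpha>"
    using infinite_countable_subset by blast
  define v where "v n i = nat ((cmax \<alpha> (f n)) $ i - \<alpha> $ i)" for n i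
  obtain g :: "nat \<Rightarrow> nat" where g: "strict_mono g" "\<forall>i\<in>(UNIV::'n set). mono (\<lambda>n. v (g n) i)"
    using mono_subseq_multi[of "UNIV :: 'n set" v] by auto
  define b' where "b' = f (g 0)"
  define b where "b = f (g 1)"
  have "g 0 < g 1" using g(1) by (simp add: strict_mono_def)
  then have ne: "b' \<noteq> b" using f(1) unfolding b'_def b_def inj_def by fastforce
  have b'N: "b' \<in> neighbors A \<alpha>" and bN: "b \<in> neighbors A \<alpha>" using f(2) b'_def b_def by auto
  have vle: "v (g 0) i \<le> v (g 1) i" for i using g(2) by (auto simp: mono_def)
  have "cle (cmax \<alpha> b') (cmax \<alpha> b)"
    unfolding cle_def
  proof
    fix i
    show "cmax \<alpha> b' $ i \<le> cmax \<alpha> b $ i"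
      using vle[of i] unfolding v_def b'_def[symmetric] b_def[symmetric]
      by (simp add: cmax_def)
  qed
  moreover have "cle b' (cmax \<alpha> b')" by (auto simp: cle_def cmax_def)
  ultimately have "cle b' (cmax \<alpha> b)" unfolding cle_def by (meson order_trans)
  moreover have "b' \<in> A" "b' \<noteq> \<alpha>" using b'N by (auto simp: neighbors_def)
  ultimately show False using key[OF assms(2) assms(4) bN, of b'] ne by simp
qed

end
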